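(* Let $U_1,\dots,U_n$ be i.i.d. uniform on $(0,1)$ with order statistics $U_{(1)}\le\dots\le U_{(n)}$, let $k_1,k_2\in\mathbb{N}$ with $k_1+k_2<n$, and let $\Xi:=1-U_{(n-k_2+1)}+U_{(k_1)}$. Then for any $t>0$, \[\Pr\left(\Xi>\frac{(\sqrt{k_1+k_2-1}+\sqrt t)^2}{n}\right)\leq e^{-t}.\] *)

theory Defs
  imports "HOL-Probability.Probability"
begin

text \<open>The k-th order statistic (1-indexed: k = 1 is the minimum, k = n the maximum)
of the sample x 0, ..., x (n-1).\<close>
definition order_stat :: "(nat \<Rightarrow> real) \<Rightarrow> nat \<Rightarrow> nat \<Rightarrow> real" where
  "order_stat x n k = sort (map x [0..<n]) ! (k - 1)"

end

theory Submission
  imports Defs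
begin


definition U01 :: "real measure" where "U01 = uniform_measure lborel {0<..<1}"

lemma U01_density: "U01 = density lborel (indicator {0<..<1::real})"
  unfolding U01_def uniform_measure_def by (simp add: divide_ennreal_def)

lemma prob_space_U01: "prob_space U01"
  unfolding U01_def by (rule prob_space_uniform_measure) auto

lemma sets_U01[simp, measurable_cong]: "sets U01 = sets borel"
  by (simp add: U01_density)

lemma space_U01[simp]: "space U01 = UNIV"
  by (simp add: U01_density)

lemma nn_integral_U01:
  assumes [measurable]: "f \<in> borel_measurable borel"
  shows "(\<integral>\<^sup>+x. f x \<partial>U01) = (\<integral>\<^sup>+x. indicator {0<..<1::real} x * f x \<partial>lborel)"
  unfolding U01_density by (subst nn_integral_density) auto

lemma U01_refl:
  assumes [measurable]: "f \<in> borel_measurable borel"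
  shows "(\<integral>\<^sup>+v. f (1 - v) \<partial>U01) = (\<integral>\<^sup>+v. f v \<partial>U01)"
proof -
  have "(\<integral>\<^sup>+v. f v \<partial>U01) = (\<integral>\<^sup>+x. indicator {0<..<1::real} x * f x \<partial>lborel)"
    by (rule nn_integral_U01) simp
  also have "\<dots> = ennreal \<bar>-1::real\<bar> * (\<integral>\<^sup>+x. indicator {0<..<1::real} (1 + (-1) * x) * f (1 + (-1) * x) \<partial>lborel)"
    by (rule nn_integral_real_affine) auto
  also have "\<dots> = (\<integral>\<^sup>+x. indicator {0<..<1::real} x * f (1 - x) \<partial>lborel)"
    by (auto intro!: nn_integral_cong simp: indicator_def)
  also have "\<dots> = (\<integral>\<^sup>+v. f (1 - v) \<partial>U01)"
    by (rule nn_integral_U01[symmetric]) simp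
  finally show ?thesis ..
qed

lemma frac_shift_gt: "0 < x \<Longrightarrow> x < 1 \<Longrightarrow> 0 < c \<Longrightarrow> c < x \<Longrightarrow> frac (x - c) = x - (c::real)"
  by (simp add: frac_eq)

lemma frac_shift_lt: "0 < x \<Longrightarrow> x < 1 \<Longrightarrow> c < 1 \<Longrightarrow> x < c \<Longrightarrow> frac (x - c) = x - (c::real) + 1"
proof -
  assume a: "0 < x" "x < 1" "c < 1" "x < c"
  have "floor (x - c) = -1" using a by (simp add: floor_eq_iff)
  then show ?thesis by (simp add: frac_def)
qed

lemma U01_shift:
  assumes [measurable]: "f \<in> borel_measurable borel" and c: "0 < c" "c < (1::real)"
  shows "(\<integral>\<^sup>+v. f (frac (v - c)) \<partial>U01) = (\<integral>\<^sup>+v. f v \<partial>U01)"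
proof -
  have "(\<integral>\<^sup>+v. f (frac (v - c)) \<partial>U01) = (\<integral>\<^sup>+x. indicator {0<..<1::real} x * f (frac (x - c)) \<partial>lborel)"
    by (rule nn_integral_U01) (simp add: frac_def)
  also have "\<dots> = (\<integral>\<^sup>+x. indicator {c<..<1::real} x * f (x - c) + indicator {0<..<c} x * f (x - c + 1) \<partial>lborel)"
  proof (rule nn_integral_cong_AE)
    show "AE x in lborel. indicator {0<..<1::real} x * f (frac (x - c)) =
       indicator {c<..<1::real} x * f (x - c) + indicator {0<..<c} x * f (x - c + 1)"
      using AE_lborel_singleton[of c]
    proof eventually_elim
      case (elim x)
      show ?case
        using elim c frac_shift_gt[of x c] frac_shift_lt[of x c]
        by (cases "x < c") (auto simp: indicator_def)
    qed
  qed
  also have "\<dots> = (\<integral>\<^sup>+x. indicator {c<..<1::real} x * f (x - c) \<partial>lborel) + (\<integral>\<^sup>+x. indicator {0<..<c} x * f (x - c + 1) \<partial>lborel)"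
    by (rule nn_integral_add) auto
  also have "(\<integral>\<^sup>+x. indicator {c<..<1::real} x * f (x - c) \<partial>lborel) = (\<integral>\<^sup>+x. indicator {0<..<1 - c::real} x * f x \<partial>lborel)"
  proof -
    have "(\<integral>\<^sup>+x. indicator {c<..<1::real} x * f (x - c) \<partial>lborel) = ennreal \<bar>1::real\<bar> * (\<integral>\<^sup>+x. indicator {c<..<1::real} (c + 1 * x) * f ((c + 1 * x) - c) \<partial>lborel)"
      by (rule nn_integral_real_affine) auto
    also have "\<dots> = (\<integral>\<^sup>+x. indicator {0<..<1 - c::real} x * f x \<partial>lborel)"
      by (auto simp: indicator_def intro!: nn_integral_cong)
    finally show ?thesis .
  qed
  also have "(\<integral>\<^sup>+x. indicator {0<..<c::real} x * f (x - c + 1) \<partial>lborel) = (\<integral>\<^sup>+x. indicator {1 - c<..<1::real} x * f x \<partial>lborel)"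
  proof -
    have "(\<integral>\<^sup>+x. indicator {0<..<c::real} x * f (x - c + 1) \<partial>lborel) = ennreal \<bar>1::real\<bar> * (\<integral>\<^sup>+x. indicator {0<..<c::real} ((c - 1) + 1 * x) * f (((c - 1) + 1 * x) - c + 1) \<partial>lborel)"
      by (rule nn_integral_real_affine) auto
    also have "\<dots> = (\<integral>\<^sup>+x. indicator {1 - c<..<1::real} x * f x \<partial>lborel)"
      by (auto simp: indicator_def intro!: nn_integral_cong)
    finally show ?thesis .
  qed
  also have "(\<integral>\<^sup>+x. indicator {0<..<1 - c::real} x * f x \<partial>lborel) + (\<integral>\<^sup>+x. indicator {1 - c<..<1::real} x * f x \<partial>lborel)
     = (\<integral>\<^sup>+x. indicator {0<..<1 - c::real} x * f x + indicator {1 - c<..<1::real} x * f x \<partial>lborel)"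
    by (rule nn_integral_add[symmetric]) auto
  also have "\<dots> = (\<integral>\<^sup>+x. indicator {0<..<1::real} x * f x \<partial>lborel)"
  proof (rule nn_integral_cong_AE)
    show "AE x in lborel. indicator {0<..<1 - c::real} x * f x + indicator {1 - c<..<1::real} x * f x = indicator {0<..<1::real} x * f x"
      using AE_lborel_singleton[of "1 - c"]
      by eventually_elim (use c in \<open>auto simp: indicator_def\<close>)
  qed
  also have "\<dots> = (\<integral>\<^sup>+v. f v \<partial>U01)"
    by (rule nn_integral_U01[symmetric]) simp
  finally show ?thesis .
qed



definition Tm :: "nat \<Rightarrow> nat \<Rightarrow> (nat \<Rightarrow> real) \<Rightarrow> (nat \<Rightarrow> real)" where
  "Tm n j u = (\<lambda>i\<in>{..<n}. if i = j then 1 - u j else frac (u i - u j))"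

lemma borel_measurable_frac_comp:
  "f \<in> borel_measurable M \<Longrightarrow> (\<lambda>x. frac (f x :: real)) \<in> borel_measurable M"
  unfolding frac_def
  by (intro borel_measurable_diff measurable_compose[OF _ borel_measurable_real_floor])

interpretation U01P: product_sigma_finite "\<lambda>_::nat. U01"
  unfolding product_sigma_finite_def using prob_space_U01
  by (simp add: prob_space_imp_sigma_finite)

lemma measurable_into_U01: "f \<in> borel_measurable M \<Longrightarrow> f \<in> measurable M U01"
  using measurable_cong_sets[of M M U01 borel] by simp

lemma comp_U01: "i \<in> I \<Longrightarrow> (\<lambda>x. x i) \<in> borel_measurable (PiM I (\<lambda>_. U01))"
  using measurable_component_singleton[of i I "\<lambda>_. U01"] measurable_cong_sets[of "PiM I (\<lambda>_. U01)" "PiM I (\<lambda>_. U01)" U01 borel]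
  by simp

lemma borel_measurable_U01[simp]: "borel_measurable U01 = borel_measurable borel"
  by (rule measurable_cong_sets) auto

lemma meas_ind_frac:
  "i \<in> I \<Longrightarrow> B \<in> sets borel \<Longrightarrow> (\<lambda>x. indicator B (frac (x i - y))) \<in> borel_measurable (PiM I (\<lambda>_. U01))"
proof -
  assume i: "i \<in> I" and B: "B \<in> sets borel"
  have "(\<lambda>x. x i) \<in> borel_measurable (PiM I (\<lambda>_. U01))" using i by (rule comp_U01)
  then have "(\<lambda>x. x i - y) \<in> borel_measurable (PiM I (\<lambda>_. U01))"
    by (rule borel_measurable_diff) simp
  then have "(\<lambda>x. frac (x i - y)) \<in> borel_measurable (PiM I (\<lambda>_. U01))"
    by (rule borel_measurable_frac_comp)
  then show ?thesis using B by (rule measurable_compose[OF _ borel_measurable_indicator])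
qed

lemma prod_ind:
  assumes "finite J"
  shows "(\<Prod>i\<in>J. indicator (A i) (g i) :: ennreal) = (if \<forall>i\<in>J. g i \<in> A i then 1 else 0)"
proof (cases "\<forall>i\<in>J. g i \<in> A i")
  case True then show ?thesis by (simp add: indicator_def)
next
  case False
  then obtain i where "i \<in> J" "g i \<notin> A i" by blast
  then show ?thesis using assms False by (intro trans[OF prod_zero]) (auto simp: indicator_def)
qed

lemma Tm_measurable[measurable]:
  assumes "j < n"
  shows "Tm n j \<in> measurable (PiM {..<n} (\<lambda>_. U01)) (PiM {..<n} (\<lambda>_. U01))"
  unfolding Tm_def
proof (rule measurable_restrict, rule measurable_into_U01)
  fix i assume i: "i \<in> {..<n}"
  have [measurable]: "(\<lambda>x. x i) \<in> borel_measurable (PiM {..<n} (\<lambda>_. U01))" "(\<lambda>x. x j) \<in> borel_measurable (PiM {..<n} (\<lambda>_. U01))"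
    using i assms by (auto intro: comp_U01)
  show "(\<lambda>x. if i = j then 1 - x j else frac (x i - x j)) \<in> borel_measurable (PiM {..<n} (\<lambda>_. U01))"
    by (cases "i = j") (simp_all add: borel_measurable_frac_comp)
qed

lemma Tm_preserves:
  assumes j: "j < n"
  shows "distr (PiM {..<n} (\<lambda>_. U01)) (PiM {..<n} (\<lambda>_. U01)) (Tm n j) = PiM {..<n} (\<lambda>_. U01)"
proof (rule U01P.PiM_eqI)
  show "finite {..<n}" by simp
  show "sets (distr (PiM {..<n} (\<lambda>_. U01)) (PiM {..<n} (\<lambda>_. U01)) (Tm n j)) = sets (PiM {..<n} (\<lambda>_. U01))"
    by simp
next
  fix A assume A: "\<And>i. i \<in> {..<n} \<Longrightarrow> A i \<in> sets U01"
  define J where "J = {..<n} - {j}"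
  have IJ: "{..<n} = insert j J" "j \<notin> J" "finite J" using j by (auto simp: J_def)
  have Ameas[measurable]: "\<And>i. i \<in> {..<n} \<Longrightarrow> A i \<in> sets borel" using A by simp
  define F where "F = (\<lambda>u. indicator (A j) (1 - u j) * (\<Prod>i\<in>J. indicator (A i) (frac (u i - u j)) :: ennreal))"
  have Fmeas: "F \<in> borel_measurable (PiM (insert j J) (\<lambda>_. U01))"
    unfolding F_def
  proof (intro borel_measurable_times_ennreal borel_measurable_prod_ennreal)
    have [measurable]: "(\<lambda>x. x j) \<in> borel_measurable (PiM (insert j J) (\<lambda>_. U01))"
      by (auto intro: comp_U01)
    show "(\<lambda>x. indicator (A j) (1 - x j)) \<in> borel_measurable (PiM (insert j J) (\<lambda>_. U01))"
    proof (rule measurable_compose[OF _ borel_measurable_indicator])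
      show "(\<lambda>x. 1 - x j) \<in> borel_measurable (PiM (insert j J) (\<lambda>_. U01))" by measurable
      show "A j \<in> sets borel" using j A by auto
    qed
    fix i assume i: "i \<in> J"
    have [measurable]: "(\<lambda>x. x i) \<in> borel_measurable (PiM (insert j J) (\<lambda>_. U01))"
      using i by (auto intro: comp_U01)
    show "(\<lambda>x. indicator (A i) (frac (x i - x j))) \<in> borel_measurable (PiM (insert j J) (\<lambda>_. U01))"
    proof (rule measurable_compose[OF _ borel_measurable_indicator])
      show "(\<lambda>x. frac (x i - x j)) \<in> borel_measurable (PiM (insert j J) (\<lambda>_. U01))"
        by (intro borel_measurable_frac_comp borel_measurable_diff) (use i in \<open>auto intro: comp_U01\<close>)
      show "A i \<in> sets borel" using i A by (auto simp: J_def)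
    qed
  qed
  have PiA: "Pi\<^sub>E {..<n} A \<in> sets (PiM {..<n} (\<lambda>_. U01))"
    by (rule sets_PiM_I_finite) (use A in auto)
  have "emeasure (distr (PiM {..<n} (\<lambda>_. U01)) (PiM {..<n} (\<lambda>_. U01)) (Tm n j)) (Pi\<^sub>E {..<n} A)
     = emeasure (PiM {..<n} (\<lambda>_. U01)) (Tm n j -` Pi\<^sub>E {..<n} A \<inter> space (PiM {..<n} (\<lambda>_. U01)))"
    by (rule emeasure_distr[OF Tm_measurable[OF j] PiA])
  also have "\<dots> = (\<integral>\<^sup>+u. indicator (Tm n j -` Pi\<^sub>E {..<n} A \<inter> space (PiM {..<n} (\<lambda>_. U01))) u \<partial>PiM {..<n} (\<lambda>_. U01))"
    by (rule nn_integral_indicator[symmetric, OF measurable_sets[OF Tm_measurable[OF j] PiA]])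
  also have "\<dots> = (\<integral>\<^sup>+u. F u \<partial>PiM {..<n} (\<lambda>_. U01))"
  proof (rule nn_integral_cong)
    fix u assume u: "u \<in> space (PiM {..<n} (\<lambda>_. U01))"
    have "(Tm n j u \<in> Pi\<^sub>E {..<n} A) = ((1 - u j) \<in> A j \<and> (\<forall>i\<in>J. frac (u i - u j) \<in> A i))"
      using j by (auto simp: Tm_def PiE_def Pi_def J_def)
    then show "indicator (Tm n j -` Pi\<^sub>E {..<n} A \<inter> space (PiM {..<n} (\<lambda>_. U01))) u = F u"
      using u IJ(3) by (auto simp: F_def indicator_def prod_ind)
  qed
  also have "\<dots> = (\<integral>\<^sup>+y. (\<integral>\<^sup>+x. F (x(j := y)) \<partial>PiM J (\<lambda>_. U01)) \<partial>U01)"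
    unfolding IJ(1) by (rule U01P.product_nn_integral_insert_rev[OF IJ(3) IJ(2) Fmeas])
  also have "\<dots> = (\<integral>\<^sup>+y. indicator (A j) (1 - y) * (\<Prod>i\<in>J. emeasure U01 (A i)) \<partial>U01)"
  proof (rule nn_integral_cong_AE)
    have "AE y in U01. y \<in> {0<..<1}"
      unfolding U01_def by (rule AE_uniform_measureI) auto
    then show "AE y in U01. (\<integral>\<^sup>+x. F (x(j := y)) \<partial>PiM J (\<lambda>_. U01)) = indicator (A j) (1 - y) * (\<Prod>i\<in>J. emeasure U01 (A i))"
    proof eventually_elim
      case (elim y)
      have "(\<integral>\<^sup>+x. F (x(j := y)) \<partial>PiM J (\<lambda>_. U01))
         = (\<integral>\<^sup>+x. indicator (A j) (1 - y) * (\<Prod>i\<in>J. indicator (A i) (frac (x i - y))) \<partial>PiM J (\<lambda>_. U01))"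
      proof (rule nn_integral_cong)
        fix x
        have ne: "\<And>i. i \<in> J \<Longrightarrow> (i = j) = False" using IJ(2) by auto
        show "F (x(j := y)) = indicator (A j) (1 - y) * (\<Prod>i\<in>J. indicator (A i) (frac (x i - y)))"
          by (simp add: F_def ne cong: prod.cong)
      qed
      also have "\<dots> = indicator (A j) (1 - y) * (\<integral>\<^sup>+x. (\<Prod>i\<in>J. indicator (A i) (frac (x i - y))) \<partial>PiM J (\<lambda>_. U01))"
        using A by (intro nn_integral_cmult borel_measurable_prod_ennreal meas_ind_frac) (auto simp: J_def)
      also have "(\<integral>\<^sup>+x. (\<Prod>i\<in>J. indicator (A i) (frac (x i - y))) \<partial>PiM J (\<lambda>_. U01))
          = (\<Prod>i\<in>J. (\<integral>\<^sup>+v. indicator (A i) (frac (v - y)) \<partial>U01))"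
        using A by (intro U01P.product_nn_integral_prod measurable_compose[OF borel_measurable_frac_comp borel_measurable_indicator]) (auto simp: J_def)
      also have "\<dots> = (\<Prod>i\<in>J. emeasure U01 (A i))"
      proof (rule prod.cong)
        fix i assume "i \<in> J"
        then have [measurable]: "A i \<in> sets borel" using j by (auto simp: J_def)
        have "(\<integral>\<^sup>+v. indicator (A i) (frac (v - y)) \<partial>U01) = (\<integral>\<^sup>+v. indicator (A i) v \<partial>U01)"
          using elim by (intro U01_shift) auto
        then show "(\<integral>\<^sup>+v. indicator (A i) (frac (v - y)) \<partial>U01) = emeasure U01 (A i)"
          by simp
      qed simp
      finally show ?case .
    qed
  qed
  also have "\<dots> = (\<integral>\<^sup>+y. indicator (A j) (1 - y) \<partial>U01) * (\<Prod>i\<in>J. emeasure U01 (A i))"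
  proof (rule nn_integral_multc)
    have "A j \<in> sets borel" using A j by auto
    then show "(\<lambda>y. indicator (A j) (1 - y)) \<in> borel_measurable U01"
      by (simp add: measurable_compose[OF _ borel_measurable_indicator])
  qed
  also have "(\<integral>\<^sup>+y. indicator (A j) (1 - y) \<partial>U01) = emeasure U01 (A j)"
    using A j by (subst U01_refl) auto
  also have "emeasure U01 (A j) * (\<Prod>i\<in>J. emeasure U01 (A i)) = (\<Prod>i\<in>{..<n}. emeasure U01 (A i))"
    unfolding IJ(1) using IJ(2,3) by simp
  finally show "emeasure (distr (PiM {..<n} (\<lambda>_. U01)) (PiM {..<n} (\<lambda>_. U01)) (Tm n j)) (Pi\<^sub>E {..<n} A) = (\<Prod>i\<in>{..<n}. emeasure U01 (A i))" .
qed



lemma sets_Q[measurable_cong]: "sets (PiM I (\<lambda>_. U01)) = sets (PiM I (\<lambda>_. borel))"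
  by (rule sets_PiM_cong) auto

lemma space_Q[simp]: "space (PiM I (\<lambda>_. U01)) = space (PiM I (\<lambda>_. borel))"
  by (rule sets_eq_imp_space_eq[OF sets_Q])

lemma U01PP: "product_prob_space (\<lambda>_::'i. U01)"
  unfolding product_prob_space_def product_prob_space_axioms_def product_sigma_finite_def
  using prob_space_U01 by (simp add: prob_space_imp_sigma_finite)

lemma AE_U01_range:
  assumes i: "i \<in> I"
  shows "AE u in PiM I (\<lambda>_. U01). 0 < u i \<and> u i < 1"
proof (rule AE_I')
  let ?N = "{u\<in>space (PiM I (\<lambda>_. U01)). u i \<in> - {0<..<1}}"
  have "emeasure (PiM I (\<lambda>_. U01)) ?N = emeasure U01 (- {0<..<1})"
    using i by (intro product_prob_space.emeasure_PiM_Collect_single[OF U01PP]) auto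
  also have "\<dots> = 0"
    unfolding U01_def by (subst emeasure_uniform_measure) auto
  finally show "?N \<in> null_sets (PiM I (\<lambda>_. U01))"
    using i by (auto simp: null_sets_def)
  show "{u \<in> space (PiM I (\<lambda>_. U01)). \<not> (0 < u i \<and> u i < 1)} \<subseteq> ?N" by auto
qed

lemma U01_singleton[simp]: "emeasure U01 {y} = 0"
proof -
  have "emeasure U01 {y} = emeasure lborel ({0<..<1} \<inter> {y}) / emeasure lborel {0<..<1::real}"
    unfolding U01_def by (rule emeasure_uniform_measure) auto
  also have "emeasure lborel ({0<..<1} \<inter> {y}) = 0"
    by (rule emeasure_eq_0[of "{y}" lborel]) auto
  finally show ?thesis by simp
qed

lemma AE_U01_neq:
  fixes I :: "nat set"
  assumes I: "finite I" and i: "i \<in> I" and l: "l \<in> I" and il: "i \<noteq> l"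
  shows "AE u in PiM I (\<lambda>_. U01). u i \<noteq> u l"
proof (rule AE_I')
  define J where "J = I - {i}"
  have IJ: "I = insert i J" "i \<notin> J" "finite J" "l \<in> J" using I i l il by (auto simp: J_def)
  let ?N = "{u\<in>space (PiM I (\<lambda>_. U01)). u i = u l}"
  have Nmeas: "?N \<in> sets (PiM I (\<lambda>_. U01))"
    using i l by measurable
  have "emeasure (PiM I (\<lambda>_. U01)) ?N = (\<integral>\<^sup>+u. indicator ?N u \<partial>PiM I (\<lambda>_. U01))"
    using Nmeas by simp
  also have "\<dots> = (\<integral>\<^sup>+y. (\<integral>\<^sup>+x. indicator ?N (x(i := y)) \<partial>PiM J (\<lambda>_. U01)) \<partial>U01)"
    unfolding IJ(1) by (rule U01P.product_nn_integral_insert_rev[OF IJ(3) IJ(2)]) (use Nmeas IJ(1) in simp)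
  also have "\<dots> = (\<integral>\<^sup>+y. 0 \<partial>U01)"
  proof (rule nn_integral_cong)
    fix y
    have "(\<integral>\<^sup>+x. indicator ?N (x(i := y)) \<partial>PiM J (\<lambda>_. U01))
        = (\<integral>\<^sup>+x. indicator {x\<in>space (PiM J (\<lambda>_. U01)). x l \<in> {y}} x \<partial>PiM J (\<lambda>_. U01))"
    proof (rule nn_integral_cong)
      fix x assume x: "x \<in> space (PiM J (\<lambda>_. U01))"
      then have "x(i := y) \<in> space (PiM I (\<lambda>_. U01))"
        using IJ by (auto simp: space_PiM PiE_def extensional_def)
      then show "indicator ?N (x(i := y)) = indicator {x\<in>space (PiM J (\<lambda>_. U01)). x l \<in> {y}} x"
        using x il by (auto simp: indicator_def)
    qed
    also have "\<dots> = emeasure (PiM J (\<lambda>_. U01)) {x\<in>space (PiM J (\<lambda>_. U01)). x l \<in> {y}}"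
      using IJ by (intro nn_integral_indicator) measurable
    also have "\<dots> = emeasure U01 {y}"
      using IJ by (intro product_prob_space.emeasure_PiM_Collect_single[OF U01PP]) auto
    finally show "(\<integral>\<^sup>+x. indicator ?N (x(i := y)) \<partial>PiM J (\<lambda>_. U01)) = 0" by simp
  qed
  finally show "?N \<in> null_sets (PiM I (\<lambda>_. U01))"
    using Nmeas by (auto simp: null_sets_def)
  show "{u \<in> space (PiM I (\<lambda>_. U01)). \<not> u i \<noteq> u l} \<subseteq> ?N" by auto
qed

definition Dgood :: "nat \<Rightarrow> (nat \<Rightarrow> real) set" where
  "Dgood n = {u. (\<forall>i<n. 0 < u i \<and> u i < 1) \<and> (\<forall>i<n. \<forall>l<n. i \<noteq> l \<longrightarrow> u i \<noteq> u l)}"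

lemma AE_Dgood: "AE u in PiM {..<n} (\<lambda>_. U01). u \<in> Dgood n"
proof -
  have "AE u in PiM {..<n} (\<lambda>_. U01). \<forall>i\<in>{..<n}. 0 < u i \<and> u i < 1"
    by (intro AE_finite_allI AE_U01_range) auto
  moreover have "AE u in PiM {..<n} (\<lambda>_. U01). \<forall>i\<in>{..<n}. \<forall>l\<in>{..<n}. i \<noteq> l \<longrightarrow> u i \<noteq> u l"
    by (intro AE_finite_allI) (auto intro: AE_U01_neq)
  ultimately show ?thesis
    by eventually_elim (auto simp: Dgood_def)
qed



lemma strict_sorted_less_card:
  fixes s :: "real list"
  assumes s: "sorted_wrt (<) s" and m: "m < length s"
  shows "card {z \<in> set s. z < s ! m} = m"
proof -
  have d: "distinct s" using s by (simp add: strict_sorted_iff)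
  have "{z \<in> set s. z < s ! m} = (!) s ` {..<m}"
  proof (intro equalityI subsetI)
    fix z assume "z \<in> {z \<in> set s. z < s ! m}"
    then obtain p where p: "p < length s" "z = s ! p" "s ! p < s ! m" by (auto simp: in_set_conv_nth)
    have "p < m"
    proof (rule ccontr)
      assume "\<not> p < m"
      then have "p = m \<or> m < p" by auto
      then show False
      proof
        assume "p = m" then show False using p by simp
      next
        assume "m < p" then have "s ! m < s ! p" using s p by (simp add: sorted_wrt_iff_nth_less)
        then show False using p by simp
      qed
    qed
    then show "z \<in> (!) s ` {..<m}" using p by auto
  next
    fix z assume "z \<in> (!) s ` {..<m}"
    then obtain p where "p < m" "z = s ! p" by auto
    then show "z \<in> {z \<in> set s. z < s ! m}"
      using m s by (auto simp: sorted_wrt_iff_nth_less)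
  qed
  also have "card \<dots> = m"
    using d m by (subst card_image) (auto intro!: inj_on_nth)
  finally show ?thesis .
qed

lemma os_rank:
  assumes inj: "inj_on u {..<n}" and m: "m < n"
  shows "\<exists>j<n. order_stat u n (Suc m) = u j \<and> card {l\<in>{..<n}. u l < u j} = m"
proof -
  define xs where "xs = map u [0..<n]"
  define s where "s = sort xs"
  have dxs: "distinct xs" unfolding xs_def using inj
    by (simp add: distinct_map lessThan_atLeast0)
  have ss: "sorted_wrt (<) s" unfolding s_def using dxs by (simp add: strict_sorted_iff)
  have ls: "length s = n" by (simp add: s_def xs_def)
  have set_s: "set s = u ` {..<n}" by (simp add: s_def xs_def lessThan_atLeast0)
  have "s ! m \<in> set s" using m ls by simp
  then obtain j where j: "j < n" "s ! m = u j" using set_s by auto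
  have "card {l\<in>{..<n}. u l < u j} = card (u ` {l\<in>{..<n}. u l < u j})"
    by (rule card_image[symmetric]) (rule inj_on_subset[OF inj], auto)
  also have "u ` {l\<in>{..<n}. u l < u j} = {z \<in> set s. z < s ! m}"
    using set_s j by auto
  also have "card \<dots> = m" using ss m ls by (intro strict_sorted_less_card) auto
  finally have "card {l\<in>{..<n}. u l < u j} = m" .
  moreover have "order_stat u n (Suc m) = u j"
    using j by (simp add: order_stat_def s_def xs_def)
  ultimately show ?thesis using j by blast
qed

lemma comb:
  assumes uD: "u \<in> Dgood n" and k1: "1 \<le> k1" and k2: "1 \<le> k2" and kn: "k1 + k2 < n"
    and Xi: "1 - order_stat u n (n - k2 + 1) + order_stat u n k1 > x"
  shows "\<exists>j<n. card {l\<in>{..<n}. Tm n j u l < Tm n j u j} = k2 - 1 \<and> card {l\<in>{..<n}. Tm n j u l \<le> x} < k1 + k2"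
proof -
  have range: "\<And>i. i < n \<Longrightarrow> 0 < u i \<and> u i < 1" and dist: "\<And>i l. i < n \<Longrightarrow> l < n \<Longrightarrow> i \<noteq> l \<Longrightarrow> u i \<noteq> u l"
    using uD by (auto simp: Dgood_def)
  have inj: "inj_on u {..<n}" using dist by (auto simp: inj_on_def)
  have e1: "\<exists>j<n. order_stat u n (Suc (n - k2)) = u j \<and> card {l\<in>{..<n}. u l < u j} = n - k2"
    using kn k2 by (intro os_rank[OF inj]) auto
  have s1: "Suc (n - k2) = n - k2 + 1" by simp
  obtain j where j: "j < n" "order_stat u n (n - k2 + 1) = u j" "card {l\<in>{..<n}. u l < u j} = n - k2"
    using e1 unfolding s1 by blast
  have e2: "\<exists>j<n. order_stat u n (Suc (k1 - 1)) = u j \<and> card {l\<in>{..<n}. u l < u j} = k1 - 1"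
    using kn k1 by (intro os_rank[OF inj]) auto
  have s2: "Suc (k1 - 1) = k1" using k1 by simp
  obtain a where a: "a < n" "order_stat u n k1 = u a" "card {l\<in>{..<n}. u l < u a} = k1 - 1"
    using e2 unfolding s2 by blast
  have Xi': "1 - u j + u a > x" using Xi j a by simp
  have uaj: "u a < u j"
  proof (rule ccontr)
    assume "\<not> u a < u j"
    then have "{l\<in>{..<n}. u l < u j} \<subseteq> {l\<in>{..<n}. u l < u a}" by auto
    then have "card {l\<in>{..<n}. u l < u j} \<le> card {l\<in>{..<n}. u l < u a}" by (intro card_mono) auto
    then show False using j a kn k1 by simp
  qed
  define v where "v = Tm n j u"
  have vj: "v j = 1 - u j" using j by (simp add: v_def Tm_def)
  have vgt: "\<And>l. l < n \<Longrightarrow> u j < u l \<Longrightarrow> v l = u l - u j"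
  proof -
    fix l assume l: "l < n" "u j < u l"
    have "0 < u j" "u l < 1" using range l j by auto
    then show "v l = u l - u j" using l j by (auto simp: v_def Tm_def frac_eq)
  qed
  have vlt: "\<And>l. l < n \<Longrightarrow> u l < u j \<Longrightarrow> v l = u l - u j + 1"
    using j range by (auto simp: v_def Tm_def intro!: frac_shift_lt)
  have set1: "{l\<in>{..<n}. v l < v j} = {l\<in>{..<n}. u j < u l}"
  proof (intro equalityI subsetI)
    fix l assume l: "l \<in> {l\<in>{..<n}. v l < v j}"
    then have ln: "l < n" "l \<noteq> j" using vj by auto
    then have "u l \<noteq> u j" using dist j by auto
    moreover have "\<not> u l < u j" using vlt[of l] l range[of l] vj by auto
    ultimately show "l \<in> {l\<in>{..<n}. u j < u l}" using ln by auto
  next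
    fix l assume l: "l \<in> {l\<in>{..<n}. u j < u l}"
    then show "l \<in> {l\<in>{..<n}. v l < v j}" using vgt[of l] vj range[of l] by auto
  qed
  have split: "{..<n} = {l\<in>{..<n}. u l < u j} \<union> ({j} \<union> {l\<in>{..<n}. u j < u l})"
    using dist j by (auto, metis linorder_neqE_linordered_idom)
  have "n = card ({l\<in>{..<n}. u l < u j} \<union> ({j} \<union> {l\<in>{..<n}. u j < u l}))"
    using split by (metis card_lessThan)
  also have "\<dots> = (n - k2) + (1 + card {l\<in>{..<n}. u j < u l})"
    using j by (subst card_Un_disjoint; auto)+
  finally have cgt: "card {l\<in>{..<n}. u j < u l} = k2 - 1" using kn k2 by linarith
  have va: "v a = u a - u j + 1" using vlt[OF a(1) uaj] .
  have set2: "{l\<in>{..<n}. v l \<le> x} \<subseteq> {l\<in>{..<n}. u j < u l} \<union> ({j} \<union> {l\<in>{..<n}. u l < u a})"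
  proof
    fix l assume l: "l \<in> {l\<in>{..<n}. v l \<le> x}"
    show "l \<in> {l\<in>{..<n}. u j < u l} \<union> ({j} \<union> {l\<in>{..<n}. u l < u a})"
    proof (cases "l = j \<or> u j < u l")
      case True then show ?thesis using l by auto
    next
      case False
      then have "u l < u j" using dist[of l j] l j by auto
      then have "v l = u l - u j + 1" using vlt l by auto
      then have "u l < u a" using l va Xi' by auto
      then show ?thesis using l by auto
    qed
  qed
  have "card {l\<in>{..<n}. v l \<le> x} \<le> card ({l\<in>{..<n}. u j < u l} \<union> ({j} \<union> {l\<in>{..<n}. u l < u a}))"
    using set2 by (intro card_mono) auto
  also have "\<dots> \<le> card {l\<in>{..<n}. u j < u l} + (card {j} + card {l\<in>{..<n}. u l < u a})"
    by (meson add_left_mono card_Un_le le_trans)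
  also have "\<dots> = (k2 - 1) + (1 + (k1 - 1))" using cgt a by simp
  finally have "card {l\<in>{..<n}. v l \<le> x} < k1 + k2" using k1 k2 by linarith
  then show ?thesis using set1 cgt j unfolding v_def by auto
qed



lemma real_bound:
  fixes M N :: nat and t :: real
  assumes M: "M \<ge> 1" and t: "t > 0" and mu: "(sqrt M + sqrt t)^2 < real N"
  shows "((sqrt M + sqrt t)^2 / M) ^ M * (1 - ((sqrt M + sqrt t)^2 - M) / N) ^ N \<le> exp (-t)"
proof -
  define s where "s = sqrt M"
  define q where "q = sqrt t"
  have s: "s > 0" "s^2 = M" using M by (auto simp: s_def)
  have q: "q > 0" "q^2 = t" using t by (auto simp: q_def)
  have Npos: "N > 0" using mu
    by (metis less_numeral_extra(3) not_gr_zero of_nat_0 power2_eq_square zero_le_power2 not_less)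
  have mueq: "(s + q)^2 - M = 2 * s * q + t" using s q by (simp add: power2_eq_square algebra_simps)
  have A: "(1 - ((s + q)^2 - M) / N) ^ N \<le> exp (- ((s + q)^2 - M))"
  proof -
    have "(1 + (- ((s + q)^2 - M)) / N) ^ N \<le> exp (- ((s + q)^2 - M))"
    proof (rule exp_ge_one_plus_x_over_n_power_n)
      have "(s + q)^2 < N" using mu by (simp add: s_def q_def)
      then show "- ((s + q)^2 - M) \<ge> - real N" by simp
    qed (use Npos in auto)
    moreover have "1 + (- ((s + q)^2 - M)) / N = 1 - ((s + q)^2 - M) / N" by (simp add: minus_divide_left)
    ultimately show ?thesis by simp
  qed
  have B: "((s + q)^2 / M) ^ M \<le> exp (2 * s * q)"
  proof -
    have "(s + q)^2 / M = (1 + q / s)^2"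
      using s by (simp add: field_simps power2_eq_square)
    then have "((s + q)^2 / M) ^ M = (1 + q / s) ^ (2 * M)"
      by (simp add: power_mult)
    also have "\<dots> \<le> exp (q / s) ^ (2 * M)"
      using s q by (intro power_mono) (auto simp: exp_ge_add_one_self add_nonneg_nonneg)
    also have "\<dots> = exp (real (2 * M) * (q / s))"
      by (subst exp_of_nat_mult) simp
    also have "real (2 * M) * (q / s) = 2 * s * q"
      using s by (simp add: field_simps power2_eq_square)
    finally show ?thesis .
  qed
  have nonneg1: "0 \<le> (1 - ((s + q)^2 - M) / N) ^ N"
    using mu Npos unfolding s_def[symmetric] q_def[symmetric]
    by (intro zero_le_power) (simp add: field_simps)
  have "((s + q)^2 / M) ^ M * (1 - ((s + q)^2 - M) / N) ^ N \<le> exp (2 * s * q) * exp (- ((s + q)^2 - M))"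
    using A B nonneg1 by (intro mult_mono) auto
  also have "\<dots> = exp (-t)"
    using mueq by (simp add: mult_exp_exp)
  finally show ?thesis unfolding s_def q_def .
qed



lemma prob_space_Q: "prob_space (PiM I (\<lambda>_. U01))"
  by (intro prob_space_PiM prob_space_U01)

lemma card_sum_real: "finite I \<Longrightarrow> real (card {l\<in>I. P l}) = (\<Sum>l\<in>I. if P l then 1 else 0)"
proof -
  assume I: "finite I"
  have "(\<Sum>l\<in>I. if P l then 1 else 0) = (\<Sum>l\<in>{l\<in>I. P l}. 1::real)"
    by (rule sum.inter_filter[symmetric]) fact
  then show ?thesis by simp
qed

lemma prod_if_const: "finite I \<Longrightarrow> (\<Prod>l\<in>I. if P l then c else 1) = c ^ card {l\<in>I. P l}"
  for c :: "'a::comm_monoid_mult"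
proof -
  assume I: "finite I"
  have "(\<Prod>l\<in>I. if P l then c else 1) = (\<Prod>l\<in>{l\<in>I. P l}. c)"
    by (rule prod.inter_filter[symmetric]) fact
  then show ?thesis by simp
qed

lemma S_meas:
  fixes n :: nat
  shows "{v \<in> space (PiM {..<n} (\<lambda>_. U01)). card {l\<in>{..<n}. v l \<le> x} < K} \<in> sets (PiM {..<n} (\<lambda>_. U01))"
proof -
  have eq: "{v \<in> space (PiM {..<n} (\<lambda>_. U01)). card {l\<in>{..<n}. v l \<le> x} < K}
      = {v \<in> space (PiM {..<n} (\<lambda>_. U01)). (\<Sum>l\<in>{..<n}. if v l \<le> x then 1 else 0) < real K}"
  proof -
    have h: "\<And>v. real (card {l\<in>{..<n}. v l \<le> x}) = (\<Sum>l\<in>{..<n}. if v l \<le> x then 1 else 0)"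
      by (rule card_sum_real) simp
    show ?thesis by (auto simp: h[symmetric])
  qed
  show ?thesis unfolding eq by measurable
qed

lemma U01_atMost: "0 < x \<Longrightarrow> x < 1 \<Longrightarrow> emeasure U01 {..x} = ennreal x"
proof -
  assume x: "0 < x" "x < 1"
  have "emeasure U01 {..x} = emeasure lborel ({0<..<1} \<inter> {..x}) / emeasure lborel {0<..<1::real}"
    unfolding U01_def by (rule emeasure_uniform_measure) auto
  also have "{0<..<1} \<inter> {..x} = {0<..x}" using x by auto
  finally show ?thesis using x by (simp add: divide_ennreal_def)
qed

lemma U01_greaterThan: "0 < x \<Longrightarrow> x < 1 \<Longrightarrow> emeasure U01 {x<..} = ennreal (1 - x)"
proof -
  assume x: "0 < x" "x < 1"
  have "emeasure U01 {x<..} = emeasure lborel ({0<..<1} \<inter> {x<..}) / emeasure lborel {0<..<1::real}"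
    unfolding U01_def by (rule emeasure_uniform_measure) auto
  also have "{0<..<1} \<inter> {x<..} = {x<..<1}" using x by auto
  finally show ?thesis using x by (simp add: divide_ennreal_def)
qed

lemma chernoff:
  fixes n M :: nat and t :: real
  assumes M: "M \<ge> 1" and Mn: "M < n" and t: "t > 0"
  shows "measure (PiM {..<n} (\<lambda>_. U01)) {v \<in> space (PiM {..<n} (\<lambda>_. U01)). card {l\<in>{..<n}. v l \<le> (sqrt M + sqrt t)^2 / n} < Suc M} \<le> exp (-t)"
proof -
  define Q where "Q = PiM {..<n} (\<lambda>_. U01)"
  define mu where "mu = (sqrt M + sqrt t)^2"
  define x where "x = mu / n"
  define S where "S = {v \<in> space Q. card {l\<in>{..<n}. v l \<le> x} < Suc M}"
  interpret Q: prob_space Q unfolding Q_def by (rule prob_space_Q)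
  have Smeas: "S \<in> sets Q" unfolding S_def Q_def by (rule S_meas)
  have npos: "n > 0" using Mn by simp
  have "sqrt M + sqrt t > 0" using t by (intro add_nonneg_pos) auto
  then have mupos: "mu > 0" by (simp add: mu_def)
  have muM: "mu \<ge> M"
  proof -
    have "sqrt M \<le> sqrt M + sqrt t" using t by simp
    then have "(sqrt M)^2 \<le> (sqrt M + sqrt t)^2" by (intro power_mono) auto
    then show ?thesis by (simp add: mu_def)
  qed
  have xpos: "x > 0" using mupos npos by (simp add: x_def)
  show ?thesis
  proof (cases "x < 1")
    case False
    have "AE v in Q. v \<in> S \<longleftrightarrow> v \<in> {}"
      using AE_Dgood[of n] unfolding Q_def[symmetric]
    proof eventually_elim
      case (elim v)
      then have "\<forall>l<n. v l \<le> x" using False by (auto simp: Dgood_def)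
      then have "{l\<in>{..<n}. v l \<le> x} = {..<n}" by auto
      then show ?case using Mn by (auto simp: S_def)
    qed
    then have "measure Q S = measure Q {}" using Smeas by (intro measure_eq_AE) auto
    then have "measure Q S \<le> exp (-t)" by simp
    then show ?thesis by (simp only: Q_def S_def x_def mu_def)
  next
    case True
    define r where "r = M / mu"
    have r1: "0 < r" unfolding r_def using M mupos by (intro divide_pos_pos) auto
    have r2: "r \<le> 1" unfolding r_def using muM mupos by (simp add: divide_le_eq_1)
    note r = r1 r2
    define g where "g = (\<lambda>y::real. if y \<le> x then ennreal r else 1)"
    have gmeas: "g \<in> borel_measurable U01" unfolding g_def by simp
    have "emeasure Q S = (\<integral>\<^sup>+v. indicator S v \<partial>Q)" using Smeas by simp
    also have "\<dots> \<le> (\<integral>\<^sup>+v. ennreal ((1 / r) ^ M) * (\<Prod>l\<in>{..<n}. g (v l)) \<partial>Q)"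
    proof (rule nn_integral_mono)
      fix v assume v: "v \<in> space Q"
      define N where "N = card {l\<in>{..<n}. v l \<le> x}"
      have prodg: "(\<Prod>l\<in>{..<n}. g (v l)) = ennreal (r ^ N)"
        unfolding g_def N_def using r by (simp add: prod_if_const ennreal_power)
      show "indicator S v \<le> ennreal ((1 / r) ^ M) * (\<Prod>l\<in>{..<n}. g (v l))"
      proof (cases "v \<in> S")
        case True
        then have "N \<le> M" by (simp add: S_def N_def)
        then have "r ^ M \<le> r ^ N" using r by (intro power_decreasing) auto
        then have "1 \<le> (1 / r) ^ M * r ^ N" using r by (simp add: power_divide field_simps)
        then show ?thesis using True r by (simp add: prodg ennreal_mult[symmetric])
      qed simp
    qed
    also have "\<dots> = ennreal ((1 / r) ^ M) * (\<integral>\<^sup>+v. (\<Prod>l\<in>{..<n}. g (v l)) \<partial>Q)"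
      unfolding Q_def using gmeas
      by (intro nn_integral_cmult borel_measurable_prod_ennreal measurable_compose[OF comp_U01]) auto
    also have "(\<integral>\<^sup>+v. (\<Prod>l\<in>{..<n}. g (v l)) \<partial>Q) = (\<Prod>l\<in>{..<n}. (\<integral>\<^sup>+y. g y \<partial>U01))"
      unfolding Q_def using gmeas by (intro U01P.product_nn_integral_prod) auto
    also have "(\<integral>\<^sup>+y. g y \<partial>U01) = ennreal (r * x + (1 - x))"
    proof -
      have "(\<integral>\<^sup>+y. g y \<partial>U01) = (\<integral>\<^sup>+y. ennreal r * indicator {..x} y + indicator {x<..} y \<partial>U01)"
        by (intro nn_integral_cong) (auto simp: g_def indicator_def)
      also have "\<dots> = ennreal r * emeasure U01 {..x} + emeasure U01 {x<..}"
        by (subst nn_integral_add) (auto simp: nn_integral_cmult_indicator)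
      also have "\<dots> = ennreal (r * x) + ennreal (1 - x)"
        using xpos True r by (simp add: U01_atMost U01_greaterThan ennreal_mult)
      also have "\<dots> = ennreal (r * x + (1 - x))"
        using xpos True r by (intro ennreal_plus[symmetric]) auto
      finally show ?thesis .
    qed
    also have "(\<Prod>l\<in>{..<n}. ennreal (r * x + (1 - x))) = ennreal ((r * x + (1 - x)) ^ n)"
      using xpos True r by (simp add: ennreal_power del: ennreal_plus)
    finally have "emeasure Q S \<le> ennreal ((1 / r) ^ M * (r * x + (1 - x)) ^ n)"
      using xpos True r by (simp add: ennreal_mult[symmetric])
    then have le: "measure Q S \<le> (1 / r) ^ M * (r * x + (1 - x)) ^ n"
      using xpos True r by (simp add: Q.emeasure_eq_measure)
    have eq1: "1 / r = mu / M" using M by (simp add: r_def)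
    have eq2: "r * x + (1 - x) = 1 - (mu - M) / n"
      using mupos npos by (simp add: r_def x_def field_simps)
    have mun: "mu < n" using True npos by (simp add: x_def)
    have "(1 / r) ^ M * (r * x + (1 - x)) ^ n \<le> exp (-t)"
      unfolding eq1 eq2 mu_def using M t mun unfolding mu_def by (intro real_bound) auto
    with le have "measure Q S \<le> exp (-t)" by linarith
    then show ?thesis by (simp only: Q_def S_def x_def mu_def)
  qed
qed



lemma os_cong: "(\<And>i. i < n \<Longrightarrow> u i = w i) \<Longrightarrow> order_stat u n k = order_stat w n k"
proof -
  assume h: "\<And>i. i < n \<Longrightarrow> u i = w i"
  have hm: "map u [0..<n] = map w [0..<n]" by (rule map_cong) (auto simp: h)
  show ?thesis unfolding order_stat_def hm by (rule refl)
qed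

lemma Dgood_meas: "{u \<in> space (PiM {..<n} (\<lambda>_. U01)). u \<in> Dgood n} \<in> sets (PiM {..<n} (\<lambda>_. U01))"
proof -
  have eq: "{u \<in> space (PiM {..<n} (\<lambda>_. U01)). u \<in> Dgood n} =
    {u \<in> space (PiM {..<n} (\<lambda>_. U01)). (\<forall>i\<in>{..<n}. 0 < u i \<and> u i < 1) \<and> (\<forall>i\<in>{..<n}. \<forall>l\<in>{..<n}. i \<noteq> l \<longrightarrow> u i \<noteq> u l)}"
    unfolding Dgood_def by blast
  have c: "\<And>l. l < n \<Longrightarrow> (\<lambda>v. v l) \<in> borel_measurable (PiM {..<n} (\<lambda>_. U01))" by (intro comp_U01) auto
  have A: "{u \<in> space (PiM {..<n} (\<lambda>_. U01)). \<forall>i\<in>{..<n}. 0 < u i \<and> u i < 1} \<in> sets (PiM {..<n} (\<lambda>_. U01))"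
  proof (rule sets.sets_Collect_finite_All)
    fix i assume "i \<in> {..<n}"
    then show "{u \<in> space (PiM {..<n} (\<lambda>_. U01)). 0 < u i \<and> u i < 1} \<in> sets (PiM {..<n} (\<lambda>_. U01))"
      by (intro sets.sets_Collect_conj borel_measurable_less c measurable_const) auto
  qed simp
  have B: "{u \<in> space (PiM {..<n} (\<lambda>_. U01)). \<forall>i\<in>{..<n}. \<forall>l\<in>{..<n}. i \<noteq> l \<longrightarrow> u i \<noteq> u l} \<in> sets (PiM {..<n} (\<lambda>_. U01))"
  proof (rule sets.sets_Collect_finite_All)
    fix i assume i: "i \<in> {..<n}"
    show "{u \<in> space (PiM {..<n} (\<lambda>_. U01)). \<forall>l\<in>{..<n}. i \<noteq> l \<longrightarrow> u i \<noteq> u l} \<in> sets (PiM {..<n} (\<lambda>_. U01))"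
    proof (rule sets.sets_Collect_finite_All)
      fix l assume l: "l \<in> {..<n}"
      show "{u \<in> space (PiM {..<n} (\<lambda>_. U01)). i \<noteq> l \<longrightarrow> u i \<noteq> u l} \<in> sets (PiM {..<n} (\<lambda>_. U01))"
        using i l by (intro sets.sets_Collect_imp sets.sets_Collect_const borel_measurable_neq c) auto
    qed simp
  qed simp
  have "{u \<in> space (PiM {..<n} (\<lambda>_. U01)). (\<forall>i\<in>{..<n}. 0 < u i \<and> u i < 1) \<and> (\<forall>i\<in>{..<n}. \<forall>l\<in>{..<n}. i \<noteq> l \<longrightarrow> u i \<noteq> u l)}
    = {u \<in> space (PiM {..<n} (\<lambda>_. U01)). \<forall>i\<in>{..<n}. 0 < u i \<and> u i < 1} \<inter> {u \<in> space (PiM {..<n} (\<lambda>_. U01)). \<forall>i\<in>{..<n}. \<forall>l\<in>{..<n}. i \<noteq> l \<longrightarrow> u i \<noteq> u l}"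
    by blast
  then show ?thesis unfolding eq by (simp only: sets.Int[OF A B])
qed

lemma E_meas:
  fixes n :: nat
  assumes j: "j < n"
  shows "{v \<in> space (PiM {..<n} (\<lambda>_. U01)). card {l\<in>{..<n}. v l < v j} = K1 \<and> card {l\<in>{..<n}. v l \<le> x} < K}
    \<in> sets (PiM {..<n} (\<lambda>_. U01))"
proof -
  let ?Q = "PiM {..<n} (\<lambda>_. U01)"
  define f1 where "f1 = (\<lambda>v::nat\<Rightarrow>real. \<Sum>l\<in>{..<n}. if v l < v j then 1 else 0 :: real)"
  define f2 where "f2 = (\<lambda>v::nat\<Rightarrow>real. \<Sum>l\<in>{..<n}. if v l \<le> x then 1 else 0 :: real)"
  have c: "\<And>l. l < n \<Longrightarrow> (\<lambda>v. v l) \<in> borel_measurable ?Q" by (intro comp_U01) auto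
  have f1m: "f1 \<in> borel_measurable ?Q" unfolding f1_def
  proof (rule borel_measurable_sum)
    fix l assume "l \<in> {..<n}"
    then show "(\<lambda>v. if v l < v j then 1 else 0 :: real) \<in> borel_measurable ?Q"
      using j by (intro measurable_If measurable_const borel_measurable_less c) auto
  qed
  have f2m: "f2 \<in> borel_measurable ?Q" unfolding f2_def
  proof (rule borel_measurable_sum)
    fix l assume "l \<in> {..<n}"
    then show "(\<lambda>v. if v l \<le> x then 1 else 0 :: real) \<in> borel_measurable ?Q"
      by (intro measurable_If measurable_const borel_measurable_le c) auto
  qed
  have h1: "\<And>v. real (card {l\<in>{..<n}. v l < v j}) = f1 v"
    unfolding f1_def by (rule card_sum_real) simp
  have h2: "\<And>v. real (card {l\<in>{..<n}. v l \<le> x}) = f2 v"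
    unfolding f2_def by (rule card_sum_real) simp
  have eq: "{v \<in> space ?Q. card {l\<in>{..<n}. v l < v j} = K1 \<and> card {l\<in>{..<n}. v l \<le> x} < K}
    = {v \<in> space ?Q. f1 v \<le> real K1} \<inter> {v \<in> space ?Q. real K1 \<le> f1 v} \<inter> {v \<in> space ?Q. f2 v < real K}"
  proof -
    have e1: "\<And>v. (card {l\<in>{..<n}. v l < v j} = K1) = (f1 v \<le> real K1 \<and> real K1 \<le> f1 v)"
    proof -
      fix v :: "nat \<Rightarrow> real"
      have "(card {l\<in>{..<n}. v l < v j} = K1) = (real (card {l\<in>{..<n}. v l < v j}) = real K1)"
        by (simp only: of_nat_eq_iff)
      then show "(card {l\<in>{..<n}. v l < v j} = K1) = (f1 v \<le> real K1 \<and> real K1 \<le> f1 v)"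
        unfolding h1 by linarith
    qed
    have e2: "\<And>v. (card {l\<in>{..<n}. v l \<le> x} < K) = (f2 v < real K)"
    proof -
      fix v :: "nat \<Rightarrow> real"
      have "(card {l\<in>{..<n}. v l \<le> x} < K) = (real (card {l\<in>{..<n}. v l \<le> x}) < real K)"
        by (simp only: of_nat_less_iff)
      then show "(card {l\<in>{..<n}. v l \<le> x} < K) = (f2 v < real K)"
        unfolding h2 .
    qed
    show ?thesis unfolding e1 e2 by blast
  qed
  show ?thesis unfolding eq
    by (intro sets.Int borel_measurable_le borel_measurable_less f1m f2m measurable_const) auto
qed

lemma rank_less:
  fixes v :: "nat \<Rightarrow> real"
  assumes "j < n" "j' < n" "v j < v j'"
  shows "card {l\<in>{..<n}. v l < v j} < card {l\<in>{..<n}. v l < v j'}"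
proof (rule psubset_card_mono)
  show "finite {l\<in>{..<n}. v l < v j'}" by simp
  have "{l\<in>{..<n}. v l < v j} \<subseteq> {l\<in>{..<n}. v l < v j'}" using assms by auto
  moreover have "j \<in> {l\<in>{..<n}. v l < v j'}" "j \<notin> {l\<in>{..<n}. v l < v j}" using assms by auto
  ultimately show "{l\<in>{..<n}. v l < v j} \<subset> {l\<in>{..<n}. v l < v j'}" by blast
qed

theorem proposition4p4:
  fixes M :: "'a measure" and U :: "nat \<Rightarrow> 'a \<Rightarrow> real"
    and n k1 k2 :: nat and t :: real
  assumes "prob_space M"
    and "prob_space.indep_vars M (\<lambda>_. borel) U {..<n}"
    and "\<And>i. i < n \<Longrightarrow> U i \<in> borel_measurable M"
    and "\<And>i. i < n \<Longrightarrow> distr M lborel (U i) = uniform_measure lborel {0<..<1}"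
    and "k1 \<ge> 1" and "k2 \<ge> 1" and "k1 + k2 < n"
    and "t > 0"
  shows "measure M {\<omega> \<in> space M.
            1 - order_stat (\<lambda>i. U i \<omega>) n (n - k2 + 1) + order_stat (\<lambda>i. U i \<omega>) n k1
              > (sqrt (real (k1 + k2) - 1) + sqrt t)\<^sup>2 / real n} \<le> exp (- t)"
proof -
  interpret P: prob_space M by fact
  define Q where "Q = PiM {..<n} (\<lambda>_. U01)"
  interpret Q: prob_space Q unfolding Q_def by (rule prob_space_Q)
  define Mm where "Mm = k1 + k2 - 1"
  have Mm1: "Mm \<ge> 1" "Mm < n" "Suc Mm = k1 + k2" using assms(5,6,7) by (auto simp: Mm_def)
  have Mm_real: "real (k1 + k2) - 1 = real Mm" using assms(5,6) by (simp add: Mm_def of_nat_diff)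
  define x where "x = (sqrt (real (k1 + k2) - 1) + sqrt t)\<^sup>2 / real n"
  define X where "X = (\<lambda>\<omega>. \<lambda>i\<in>{..<n}. U i \<omega>)"
  define U' where "U' = (\<lambda>i. if i < n then U i else (\<lambda>_. 0::real))"
  have rv: "\<And>i. U' i \<in> measurable M borel" using assms(3) by (simp add: U'_def)
  have indep': "P.indep_vars (\<lambda>_. borel) U' {..<n}"
  proof -
    have "P.indep_vars (\<lambda>_. borel) U {..<n} = P.indep_vars (\<lambda>_. borel) U' {..<n}"
      by (rule P.indep_vars_cong) (auto simp: U'_def)
    then show ?thesis using assms(2) by simp
  qed
  have sQ: "sets Q = sets (PiM {..<n} (\<lambda>_. borel))" unfolding Q_def by (rule sets_Q)
  have Xmeas: "X \<in> measurable M (PiM {..<n} (\<lambda>_. borel))"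
    unfolding X_def using assms(3) by (intro measurable_restrict) auto
  have distrX: "distr M (PiM {..<n} (\<lambda>_. borel)) X = Q"
  proof -
    have "distr M (PiM {..<n} (\<lambda>_. borel)) (\<lambda>x. \<lambda>i\<in>{..<n}. U' i x) = PiM {..<n} (\<lambda>i. distr M borel (U' i))"
      using P.indep_vars_iff_distr_eq_PiM[where I="{..<n}" and X=U' and M'="\<lambda>_. borel"] rv indep' assms(7) by auto
    moreover have "(\<lambda>x. \<lambda>i\<in>{..<n}. U' i x) = X" by (auto simp: X_def U'_def fun_eq_iff)
    moreover have "PiM {..<n} (\<lambda>i. distr M borel (U' i)) = Q"
      unfolding Q_def
    proof (rule PiM_cong)
      fix i assume i: "i \<in> {..<n}"
      then have "distr M borel (U' i) = distr M lborel (U i)" by (auto simp: U'_def intro!: distr_cong)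
      also have "\<dots> = U01" using assms(4) i by (simp add: U01_def)
      finally show "distr M borel (U' i) = U01" .
    qed simp
    ultimately show ?thesis by simp
  qed
  define E where "E j = {v \<in> space Q. card {l\<in>{..<n}. v l < v j} = k2 - 1 \<and> card {l\<in>{..<n}. v l \<le> x} < k1 + k2}" for j
  define D where "D = {u \<in> space Q. u \<in> Dgood n}"
  define Big where "Big = (\<Union>j\<in>{..<n}. Tm n j -` E j \<inter> space Q) \<union> (space Q - D)"
  have Emeas: "\<And>j. j < n \<Longrightarrow> E j \<in> sets Q" unfolding E_def Q_def by (rule E_meas)
  have Dmeas: "D \<in> sets Q" unfolding D_def Q_def by (rule Dgood_meas)
  have Tmeas: "\<And>j. j < n \<Longrightarrow> Tm n j -` E j \<inter> space Q \<in> sets Q"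
  proof -
    fix j assume j: "j < n"
    show "Tm n j -` E j \<inter> space Q \<in> sets Q"
      using measurable_sets[OF Tm_measurable[OF j] Emeas[OF j, unfolded Q_def]] unfolding Q_def .
  qed
  have UTmeas: "(\<Union>j\<in>{..<n}. Tm n j -` E j \<inter> space Q) \<in> sets Q"
    using Tmeas by (intro sets.finite_UN) auto
  have Dnull: "space Q - D \<in> null_sets Q"
  proof -
    have "AE u in Q. u \<in> Dgood n" unfolding Q_def by (rule AE_Dgood)
    moreover have "{u \<in> space Q. \<not> u \<in> Dgood n} = space Q - D" by (auto simp: D_def)
    moreover have "space Q - D \<in> sets Q" using Dmeas by auto
    ultimately show ?thesis using AE_iff_null[where P="\<lambda>u. u \<in> Dgood n" and M=Q] by simp
  qed
  have Bigmeas: "Big \<in> sets Q" unfolding Big_def using UTmeas Dmeas by auto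
  have incl: "{\<omega> \<in> space M. 1 - order_stat (\<lambda>i. U i \<omega>) n (n - k2 + 1) + order_stat (\<lambda>i. U i \<omega>) n k1 > x}
      \<subseteq> X -` Big \<inter> space M"
  proof
    fix \<omega> assume \<omega>: "\<omega> \<in> {\<omega> \<in> space M. 1 - order_stat (\<lambda>i. U i \<omega>) n (n - k2 + 1) + order_stat (\<lambda>i. U i \<omega>) n k1 > x}"
    have Xs: "X \<omega> \<in> space Q" using measurable_space[OF Xmeas] \<omega> by (auto simp: Q_def)
    show "\<omega> \<in> X -` Big \<inter> space M"
    proof (cases "X \<omega> \<in> Dgood n")
      case False then show ?thesis using Xs \<omega> by (auto simp: Big_def D_def)
    next
      case True
      have os: "\<And>k. order_stat (X \<omega>) n k = order_stat (\<lambda>i. U i \<omega>) n k" by (rule os_cong) (simp add: X_def)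
      have "1 - order_stat (X \<omega>) n (n - k2 + 1) + order_stat (X \<omega>) n k1 > x" using \<omega> by (simp add: os)
      then obtain j where j: "j < n" "card {l\<in>{..<n}. Tm n j (X \<omega>) l < Tm n j (X \<omega>) j} = k2 - 1"
          "card {l\<in>{..<n}. Tm n j (X \<omega>) l \<le> x} < k1 + k2"
        using comb[OF True assms(5,6,7)] by blast
      have "Tm n j (X \<omega>) \<in> space Q" using measurable_space[OF Tm_measurable[OF j(1)]] Xs by (simp add: Q_def)
      then have "X \<omega> \<in> Tm n j -` E j \<inter> space Q" using j Xs by (simp add: E_def)
      then show ?thesis using j \<omega> by (auto simp: Big_def)
    qed
  qed
  define S where "S = {v \<in> space Q. card {l\<in>{..<n}. v l \<le> x} < Suc Mm}"
  have Smeas: "S \<in> sets Q" unfolding S_def Q_def by (rule S_meas)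
  have "measure M {\<omega> \<in> space M. 1 - order_stat (\<lambda>i. U i \<omega>) n (n - k2 + 1) + order_stat (\<lambda>i. U i \<omega>) n k1 > x}
      \<le> measure M (X -` Big \<inter> space M)"
    using incl Bigmeas sQ Xmeas by (intro P.finite_measure_mono) (auto intro: measurable_sets)
  also have "\<dots> = measure Q Big"
    using measure_distr[OF Xmeas, of Big] Bigmeas sQ distrX by simp
  also have "\<dots> = measure Q (\<Union>j\<in>{..<n}. Tm n j -` E j \<inter> space Q)"
    unfolding Big_def by (rule measure_Un_null_set[OF UTmeas Dnull])
  also have "\<dots> \<le> (\<Sum>j\<in>{..<n}. measure Q (Tm n j -` E j \<inter> space Q))"
    by (rule Q.finite_measure_subadditive_finite) (auto intro: Tmeas)
  also have "\<dots> = (\<Sum>j\<in>{..<n}. measure Q (E j \<inter> D))"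
  proof (rule sum.cong[OF refl])
    fix j assume j: "j \<in> {..<n}"
    have "measure Q (Tm n j -` E j \<inter> space Q) = measure (distr Q Q (Tm n j)) (E j)"
      using j Emeas by (intro measure_distr[symmetric]) (auto simp: Q_def)
    also have "distr Q Q (Tm n j) = Q" unfolding Q_def using j by (intro Tm_preserves) auto
    also have "measure Q (E j) = measure Q (E j \<inter> D)"
    proof (rule measure_eq_AE)
      have "AE u in Q. u \<in> Dgood n" unfolding Q_def by (rule AE_Dgood)
      then show "AE v in Q. (v \<in> E j) = (v \<in> E j \<inter> D)"
        using AE_space by eventually_elim (auto simp: D_def)
    qed (use j Emeas Dmeas in auto)
    finally show "measure Q (Tm n j -` E j \<inter> space Q) = measure Q (E j \<inter> D)" .
  qed
  also have "\<dots> = measure Q (\<Union>j\<in>{..<n}. E j \<inter> D)"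
  proof (rule Q.finite_measure_finite_Union[symmetric])
    show "finite {..<n}" by simp
    show "(\<lambda>j. E j \<inter> D) ` {..<n} \<subseteq> sets Q" using Emeas Dmeas by auto
    show "disjoint_family_on (\<lambda>j. E j \<inter> D) {..<n}"
    proof (unfold disjoint_family_on_def, intro ballI impI)
      fix j j' assume jj: "j \<in> {..<n}" "j' \<in> {..<n}" "j \<noteq> j'"
      show "E j \<inter> D \<inter> (E j' \<inter> D) = {}"
      proof (rule ccontr)
        assume "E j \<inter> D \<inter> (E j' \<inter> D) \<noteq> {}"
        then obtain v where v: "v \<in> E j" "v \<in> E j'" "v \<in> Dgood n" by (auto simp: D_def)
        have "v j \<noteq> v j'" using v(3) jj by (auto simp: Dgood_def)
        then have "v j < v j' \<or> v j' < v j" by auto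
        then show False
        proof
          assume "v j < v j'"
          from rank_less[OF _ _ this] jj have "card {l\<in>{..<n}. v l < v j} < card {l\<in>{..<n}. v l < v j'}" by auto
          then show False using v by (simp add: E_def)
        next
          assume "v j' < v j"
          from rank_less[OF _ _ this] jj have "card {l\<in>{..<n}. v l < v j'} < card {l\<in>{..<n}. v l < v j}" by auto
          then show False using v by (simp add: E_def)
        qed
      qed
    qed
  qed
  also have "\<dots> \<le> measure Q S"
  proof (rule Q.finite_measure_mono[OF _ Smeas])
    show "(\<Union>j\<in>{..<n}. E j \<inter> D) \<subseteq> S"
    proof
      fix v assume "v \<in> (\<Union>j\<in>{..<n}. E j \<inter> D)"
      then obtain j where "v \<in> E j" by auto
      then show "v \<in> S" unfolding E_def S_def using Mm1(3) by simp
    qed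
  qed
  also have "\<dots> \<le> exp (- t)"
    unfolding S_def Q_def x_def Mm_real using chernoff[OF Mm1(1) Mm1(2) assms(8)] .
  finally show ?thesis unfolding x_def .
qed

end
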